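(* Let $\mathbf{\Phi}\in\mathbb{R}^{m\times n}$ be a measurement matrix, let $\mathbf{x}\in\mathbb{R}^n$ be any $K$-sparse signal with support $T=\mathrm{supp}(\mathbf{x})$, and let $\mathbf{y}=\mathbf{\Phi}\mathbf{x}$. Run OMP on $(\mathbf{y},\mathbf{\Phi})$ (with $c>1$ a constant, as in OMP$_{cK}$), producing estimated supports $T^0=\emptyset\subseteq T^1\subseteq T^2\subseteq\cdots$. For an integer $k$ with $0\le k\le\lceil cK\rceil$, let $N^k=|T\setminus T^k|$ be the number of support indices not yet selected after $k$ iterations. Then $T\subseteq T^{k+\lceil cN^k\rceil}$ provided $$c\;\ge\;-\frac{4(1+\delta_1)}{1-\delta_s}\,\log\!\left(\frac12-\frac12\sqrt{\frac{\delta_{N^k}+\delta_s}{1+\delta_{N^k}}}\right),$$ where $s=|T\cup T^{k+\lfloor cN^k\rfloor}|$ and $\log$ is the natural logarithm.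
   Context: Orthogonal matching pursuit (OMP): given $\mathbf{y}\in\mathbb{R}^m$ and $\mathbf{\Phi}\in\mathbb{R}^{m\times n}$ with columns $\phi_1,\dots,\phi_n$, set $T^0=\emptyset$, $\mathbf{r}^0=\mathbf{y}$, and for $k=1,2,\dots$: choose $t^k\in\arg\max_{i\in\{1,\dots,n\}}|\langle \mathbf{r}^{k-1},\phi_i\rangle|$; set $T^k=T^{k-1}\cup\{t^k\}$; let $\hat{\mathbf{x}}^k=\arg\min_{\mathbf{u}:\,\mathrm{supp}(\mathbf{u})=T^k}\|\mathbf{y}-\mathbf{\Phi}\mathbf{u}\|_2$; set $\mathbf{r}^k=\mathbf{y}-\mathbf{\Phi}\hat{\mathbf{x}}^k$. OMP$_{cK}$ denotes OMP run for $\lceil cK\rceil$ (or more) iterations with a constant $c>1$. A vector is $K$-sparse if it has at most $K$ nonzero entries. The restricted isometry constant $\delta_j$ of $\mathbf{\Phi}$ is the smallest $\delta\ge0$ such that $(1-\delta)\|\mathbf{v}\|_2^2\le\|\mathbf{\Phi}\mathbf{v}\|_2^2\le(1+\delta)\|\mathbf{v}\|_2^2$ for every $j$-sparse $\mathbf{v}\in\mathbb{R}^n$. *)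

theory Defs
  imports "HOL-Analysis.Analysis"
begin

definition supp :: "real^'n \<Rightarrow> 'n set" where
  "supp v = {i. v $ i \<noteq> 0}"

definition ric :: "real^'n^'m \<Rightarrow> nat \<Rightarrow> real" where
  "ric \<Phi> j = Inf {\<delta>. \<delta> \<ge> 0 \<and>
     (\<forall>v::real^'n. card (supp v) \<le> j \<longrightarrow>
        (1 - \<delta>) * (norm v)\<^sup>2 \<le> (norm (\<Phi> *v v))\<^sup>2 \<and>
        (norm (\<Phi> *v v))\<^sup>2 \<le> (1 + \<delta>) * (norm v)\<^sup>2)}"

text \<open>A run of OMP on (y, Phi): T k is the estimated support after k iterations,
  r k the residual. Ties in the argmax are allowed to be broken arbitrarily.\<close>
definition omp_run :: "real^'n^'m \<Rightarrow> real^'m \<Rightarrow> (nat \<Rightarrow> 'n set) \<Rightarrow> (nat \<Rightarrow> real^'m) \<Rightarrow> bool" where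
  "omp_run \<Phi> y T r \<longleftrightarrow>
     T 0 = {} \<and> r 0 = y \<and>
     (\<forall>k. \<exists>t. (\<forall>i. \<bar>r k \<bullet> column i \<Phi>\<bar> \<le> \<bar>r k \<bullet> column t \<Phi>\<bar>) \<and>
              T (Suc k) = insert t (T k) \<and>
              (\<exists>u. supp u \<subseteq> T (Suc k) \<and>
                   (\<forall>w. supp w \<subseteq> T (Suc k) \<longrightarrow> norm (y - \<Phi> *v u) \<le> norm (y - \<Phi> *v w)) \<and>
                   r (Suc k) = y - \<Phi> *v u))"

end

theory Submission imports Defs begin
lemma norm_sq_sum: "(norm (v::real^'n))\<^sup>2 = (\<Sum>i\<in>UNIV. (v$i)\<^sup>2)"
  unfolding power2_norm_eq_inner inner_vec_def by (simp add: power2_eq_square)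

lemma inner_Phi: "(w::real^'m) \<bullet> ((\<Phi>::real^'n^'m) *v v) = (\<Sum>i\<in>UNIV. v$i * (w \<bullet> column i \<Phi>))"
  by (simp add: matrix_mult_sum inner_sum_right scalar_mult_eq_scaleR)

lemma Phi_axis: "(\<Phi>::real^'n^'m) *v axis i a = a *\<^sub>R column i \<Phi>"
proof -
  have "(\<Phi>::real^'n^'m) *v axis i a = (\<Sum>j\<in>UNIV. axis i a $ j *\<^sub>R column j \<Phi>)"
    by (simp add: matrix_mult_sum scalar_mult_eq_scaleR)
  also have "\<dots> = (\<Sum>j\<in>{i}. axis i a $ j *\<^sub>R column j \<Phi>)"
    by (rule sum.mono_neutral_right) (auto simp: axis_def)
  finally show ?thesis by simp
qed

lemma supp_axis: "supp (axis i (a::real)) \<subseteq> {i}"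
  by (auto simp: supp_def axis_def)

definition Dset :: "real^'n^'m \<Rightarrow> nat \<Rightarrow> real set" where
  "Dset \<Phi> j = {\<delta>. \<delta> \<ge> 0 \<and>
     (\<forall>v::real^'n. card (supp v) \<le> j \<longrightarrow>
        (1 - \<delta>) * (norm v)\<^sup>2 \<le> (norm (\<Phi> *v v))\<^sup>2 \<and>
        (norm (\<Phi> *v v))\<^sup>2 \<le> (1 + \<delta>) * (norm v)\<^sup>2)}"

lemma ric_Dset: "ric \<Phi> j = Inf (Dset \<Phi> j)"
  by (simp add: ric_def Dset_def)

lemma Dset_ne: "Dset (\<Phi>::real^'n^'m) j \<noteq> {}"
proof -
  obtain K where K: "\<And>v. norm (\<Phi> *v v) \<le> norm v * K" "K > 0"
    using bounded_linear.pos_bounded[OF matrix_vector_mul_bounded_linear[of \<Phi>]] by blast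
  have "K\<^sup>2 + 1 \<in> Dset \<Phi> j"
    unfolding Dset_def
  proof (intro CollectI conjI allI impI)
    fix v :: "real^'n"
    have "(norm (\<Phi> *v v))\<^sup>2 \<le> (norm v * K)\<^sup>2"
      using K(1)[of v] by (simp add: power_mono)
    also have "\<dots> \<le> (1 + (K\<^sup>2 + 1)) * (norm v)\<^sup>2"
      by (simp add: power_mult_distrib algebra_simps)
    finally show "(norm (\<Phi> *v v))\<^sup>2 \<le> (1 + (K\<^sup>2 + 1)) * (norm v)\<^sup>2" .
    have "(1 - (K\<^sup>2 + 1)) * (norm v)\<^sup>2 \<le> 0"
      by (simp add: mult_nonpos_nonneg)
    then show "(1 - (K\<^sup>2 + 1)) * (norm v)\<^sup>2 \<le> (norm (\<Phi> *v v))\<^sup>2"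
      by (meson order_trans zero_le_power2)
  qed simp
  then show ?thesis by blast
qed

lemma ric_nonneg: "ric \<Phi> j \<ge> 0"
  unfolding ric_Dset by (rule cInf_greatest[OF Dset_ne]) (simp add: Dset_def)

lemma ric_mono: assumes "j \<le> j'" shows "ric \<Phi> j \<le> ric \<Phi> j'"
  unfolding ric_Dset
proof (rule cInf_superset_mono[OF Dset_ne])
  show "bdd_below (Dset \<Phi> j)" by (rule bdd_belowI[of _ 0]) (simp add: Dset_def)
  show "Dset \<Phi> j' \<subseteq> Dset \<Phi> j" using assms by (auto simp: Dset_def)
qed

lemma ric_lower:
  assumes "card (supp v) \<le> j"
  shows "(1 - ric \<Phi> j) * (norm v)\<^sup>2 \<le> (norm (\<Phi> *v v))\<^sup>2"
proof (cases "v = 0")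
  case True then show ?thesis by simp
next
  case False
  then have a: "(norm v)\<^sup>2 > 0" by simp
  have "1 - (norm (\<Phi> *v v))\<^sup>2 / (norm v)\<^sup>2 \<le> ric \<Phi> j"
    unfolding ric_Dset
  proof (rule cInf_greatest[OF Dset_ne])
    fix d assume "d \<in> Dset \<Phi> j"
    then have "(1 - d) * (norm v)\<^sup>2 \<le> (norm (\<Phi> *v v))\<^sup>2" using assms by (auto simp: Dset_def)
    then show "1 - (norm (\<Phi> *v v))\<^sup>2 / (norm v)\<^sup>2 \<le> d" using a
      by (simp add: field_simps)
  qed
  then show ?thesis using a by (simp add: field_simps)
qed

lemma ric_upper:
  assumes "card (supp v) \<le> j"
  shows "(norm (\<Phi> *v v))\<^sup>2 \<le> (1 + ric \<Phi> j) * (norm v)\<^sup>2"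
proof (cases "v = 0")
  case True then show ?thesis by simp
next
  case False
  then have a: "(norm v)\<^sup>2 > 0" by simp
  have "(norm (\<Phi> *v v))\<^sup>2 / (norm v)\<^sup>2 - 1 \<le> ric \<Phi> j"
    unfolding ric_Dset
  proof (rule cInf_greatest[OF Dset_ne])
    fix d assume "d \<in> Dset \<Phi> j"
    then have "(norm (\<Phi> *v v))\<^sup>2 \<le> (1 + d) * (norm v)\<^sup>2" using assms by (auto simp: Dset_def)
    then show "(norm (\<Phi> *v v))\<^sup>2 / (norm v)\<^sup>2 - 1 \<le> d" using a
      by (simp add: field_simps)
  qed
  then show ?thesis using a by (simp add: field_simps)
qed


lemma supp_add: "supp (u + w) \<subseteq> supp u \<union> supp (w::real^'n)"
  by (auto simp: supp_def)
lemma supp_diff: "supp (u - w) \<subseteq> supp u \<union> supp (w::real^'n)"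
  by (auto simp: supp_def)
lemma supp_empty: "supp (w::real^'n) \<subseteq> {} \<Longrightarrow> w = 0"
  by (auto simp: supp_def vec_eq_iff)

definition tailv :: "('a \<Rightarrow> real) \<Rightarrow> 'a set \<Rightarrow> nat \<Rightarrow> real" where
  "tailv f M m = Min ((\<lambda>A. sum f A) ` {A. A \<subseteq> M \<and> card A = m})"

lemma tailv_wit:
  assumes "finite M" "m \<le> card M"
  shows "\<exists>A. A \<subseteq> M \<and> card A = m \<and> sum f A = tailv f M m"
proof -
  have fin: "finite {A. A \<subseteq> M \<and> card A = m}" using assms(1) by auto
  have ne: "{A. A \<subseteq> M \<and> card A = m} \<noteq> {}"
    using obtain_subset_with_card_n[OF assms(2)] by blast
  have "tailv f M m \<in> (\<lambda>A. sum f A) ` {A. A \<subseteq> M \<and> card A = m}"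
    unfolding tailv_def using fin ne by (intro Min_in) auto
  then show ?thesis by auto
qed

lemma tailv_le:
  assumes "finite M" "A \<subseteq> M" "card A = m"
  shows "tailv f M m \<le> sum f A"
  unfolding tailv_def using assms by (intro Min_le) auto

lemma tailv_ge:
  assumes "finite M" "A \<subseteq> M" "m \<le> card A" "\<And>i. f i \<ge> 0"
  shows "tailv f M m \<le> sum f A"
proof -
  obtain B where B: "B \<subseteq> A" "card B = m" using obtain_subset_with_card_n[OF assms(3)] by blast
  have "tailv f M m \<le> sum f B" using assms B by (intro tailv_le) auto
  also have "\<dots> \<le> sum f A" using B assms by (intro sum_mono2) (auto intro: finite_subset)
  finally show ?thesis .
qed

lemma tailv_zero: "finite M \<Longrightarrow> tailv f M 0 = 0"
proof -
  assume "finite M"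
  then have "{A. A \<subseteq> M \<and> card A = 0} = {{}}" by (auto dest: finite_subset)
  then show ?thesis unfolding tailv_def by simp
qed

lemma tailv_full: "finite M \<Longrightarrow> tailv f M (card M) = sum f M"
proof -
  assume "finite M"
  then have "{A. A \<subseteq> M \<and> card A = card M} = {M}" using card_subset_eq by blast
  then show ?thesis unfolding tailv_def by simp
qed

lemma tailv_nonneg:
  assumes "finite M" "m \<le> card M" "\<And>i. f i \<ge> 0"
  shows "tailv f M m \<ge> 0"
  using tailv_wit[OF assms(1,2), of f] assms(3) by (metis sum_nonneg)

lemma tailv_pos:
  assumes "finite M" "1 \<le> m" "m \<le> card M" "\<And>i. i \<in> M \<Longrightarrow> f i > 0"
  shows "tailv f M m > 0"
proof -
  obtain A where A: "A \<subseteq> M" "card A = m" "sum f A = tailv f M m" using tailv_wit[OF assms(1,3)] by blast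
  have "A \<noteq> {}" "finite A" using A assms(1,2) by (auto intro: finite_subset)
  then have "sum f A > 0" using A(1) assms(4) by (intro sum_pos) auto
  then show ?thesis using A by simp
qed


definition rst :: "'n set \<Rightarrow> real^'n \<Rightarrow> real^'n" where
  "rst A v = (\<chi> i. if i \<in> A then v$i else 0)"

lemma supp_rst: "supp (rst A v) \<subseteq> A"
  by (auto simp: supp_def rst_def)

lemma norm_rst: "(norm (rst A v))\<^sup>2 = (\<Sum>i\<in>A. (v$i)\<^sup>2)"
proof -
  have "(norm (rst A v))\<^sup>2 = (\<Sum>i\<in>UNIV. if i \<in> A then (v$i)\<^sup>2 else 0)"
    unfolding norm_sq_sum by (rule sum.cong) (auto simp: rst_def)
  also have "\<dots> = (\<Sum>i\<in>UNIV \<inter> A. (v$i)\<^sup>2)" by (rule sum.inter_restrict[symmetric]) simp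
  finally show ?thesis by simp
qed

lemma chain_abstract:
  fixes Qs u :: "nat \<Rightarrow> real"
  assumes q: "0 < q" "q < 1/2" and g: "g \<ge> 0" and L: "L \<ge> 1"
    and uL: "u L \<le> 2 * q * u (L - 1)"
    and ult: "\<And>l. 1 \<le> l \<Longrightarrow> l < L \<Longrightarrow> 2 * q * u (l - 1) < u l"
    and u0: "\<And>l. u l \<ge> 0"
    and base: "Qs 0 \<le> (1 + g) * u 0"
    and stage: "\<And>l. 1 \<le> l \<Longrightarrow> l \<le> L \<Longrightarrow> Qs l \<le> (1 - q) * (1 + g) * u l + q * Qs (l - 1)"
    and upos: "u (L - 1) > 0"
  shows "Qs L < (1 + g) * (4 * q * (1 - q)) * u (L - 1)"
proof -
  define C where "C l = 2 * (1 - q) - (1 - 2 * q) / 2 ^ l" for l :: nat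
  have C1: "C l \<ge> 0" for l
  proof -
    have "(1 - 2 * q) / 2 ^ l \<le> (1 - 2 * q)" using q by (simp add: divide_le_eq)
    then show ?thesis unfolding C_def using q by simp
  qed
  have inv: "l \<le> L - 1 \<Longrightarrow> Qs l \<le> (1 + g) * C l * u l" for l
  proof (induction l)
    case 0 then show ?case using base by (simp add: C_def)
  next
    case (Suc l)
    have l1: "1 \<le> Suc l" "Suc l < L" using Suc.prems L by auto
    have IH: "Qs l \<le> (1 + g) * C l * u l" using Suc.IH Suc.prems by simp
    have ul: "2 * q * u l < u (Suc l)" using ult[OF l1] by simp
    have "Qs (Suc l) \<le> (1 - q) * (1 + g) * u (Suc l) + q * Qs l" using stage[of "Suc l"] l1 by simp
    also have "\<dots> \<le> (1 - q) * (1 + g) * u (Suc l) + q * ((1 + g) * C l * u l)"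
      using IH q by (intro add_left_mono mult_left_mono) auto
    also have "q * ((1 + g) * C l * u l) \<le> ((1 + g) * C l / 2) * u (Suc l)"
    proof -
      have "q * ((1 + g) * C l * u l) = ((1 + g) * C l / 2) * (2 * q * u l)" by simp
      also have "\<dots> \<le> ((1 + g) * C l / 2) * u (Suc l)"
        using ul C1[of l] g by (intro mult_left_mono) auto
      finally show ?thesis .
    qed
    then have "(1 - q) * (1 + g) * u (Suc l) + q * ((1 + g) * C l * u l)
        \<le> (1 + g) * ((1 - q) + C l / 2) * u (Suc l)" by (simp add: algebra_simps)
    also have "(1 - q) + C l / 2 = C (Suc l)" unfolding C_def by (simp add: field_simps)
    finally show ?case .
  qed
  have IL: "Qs (L - 1) \<le> (1 + g) * C (L - 1) * u (L - 1)" using inv by simp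
  have "Qs L \<le> (1 - q) * (1 + g) * u L + q * Qs (L - 1)" using stage[of L] L by simp
  also have "\<dots> \<le> (1 - q) * (1 + g) * (2 * q * u (L - 1)) + q * ((1 + g) * C (L - 1) * u (L - 1))"
    using uL IL q g by (intro add_mono mult_left_mono) auto
  also have "\<dots> = (1 + g) * u (L - 1) * (2 * q * (1 - q) + q * C (L - 1))" by (simp add: algebra_simps)
  also have "\<dots> < (1 + g) * u (L - 1) * (4 * q * (1 - q))"
  proof (rule mult_strict_left_mono)
    have "0 < (1 - 2 * q) / 2 ^ (L - 1)" using q by simp
    then have "q * C (L - 1) < q * (2 * (1 - q))" unfolding C_def using q by (intro mult_strict_left_mono) auto
    then show "2 * q * (1 - q) + q * C (L - 1) < 4 * q * (1 - q)" by (simp add: algebra_simps)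
  qed (use g upos in simp)
  finally show ?thesis by (simp add: algebra_simps)
qed


lemma pow_exp_le:
  fixes \<beta> lam :: real and s p :: nat
  assumes b: "0 \<le> \<beta>" "\<beta> \<le> 1" and s: "s \<ge> 1" and lam: "lam > 0" and sp: "real s \<le> real p / lam"
  shows "(1 - \<beta> / s) ^ p \<le> exp (- \<beta> * lam)"
proof -
  have s0: "real s \<ge> 1" using s by simp
  have a0: "0 \<le> 1 - \<beta> / s" using b s0 by (simp add: field_simps)
  have a1: "1 - \<beta> / s \<le> exp (- \<beta> / s)" using exp_ge_add_one_self[of "- \<beta> / s"] by simp
  have "(1 - \<beta> / s) ^ p \<le> exp (- \<beta> / s) ^ p" using a1 a0 by (rule power_mono)
  also have "\<dots> = exp (real p * (- \<beta> / s))" by (rule exp_of_nat_mult[symmetric])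
  also have "\<dots> \<le> exp (- \<beta> * lam)"
  proof -
    have "lam * s \<le> p" using sp lam by (simp add: field_simps)
    then have "\<beta> * (lam * s) \<le> \<beta> * p" using b by (intro mult_left_mono) auto
    then have "- \<beta> * lam \<ge> real p * (- \<beta> / s)" using s0 by (simp add: field_simps)
    then show ?thesis by simp
  qed
  finally show ?thesis .
qed


lemma int_budget:
  fixes c :: real and P N N' :: nat
  assumes c: "c \<ge> 0" and le: "real P + c * real N' \<le> c * real N"
  shows "P + nat \<lfloor>c * real N'\<rfloor> \<le> nat \<lfloor>c * real N\<rfloor>"
    and "P + nat \<lceil>c * real N'\<rceil> \<le> nat \<lceil>c * real N\<rceil>"
proof -
  have n0: "c * real N' \<ge> 0" using c by simp
  have "\<lfloor>c * real N' + of_int (int P)\<rfloor> \<le> \<lfloor>c * real N\<rfloor>" using le by (intro floor_mono) simp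
  then have "\<lfloor>c * real N'\<rfloor> + int P \<le> \<lfloor>c * real N\<rfloor>" by simp
  then show "P + nat \<lfloor>c * real N'\<rfloor> \<le> nat \<lfloor>c * real N\<rfloor>" using n0 by linarith
  have "\<lceil>c * real N' + of_int (int P)\<rceil> \<le> \<lceil>c * real N\<rceil>" using le by (intro ceiling_mono) simp
  then have "\<lceil>c * real N'\<rceil> + int P \<le> \<lceil>c * real N\<rceil>"
    using ceiling_add_of_int[of "c * real N'" "int P"] by (simp del: ceiling_add_of_int)
  moreover have "\<lceil>c * real N'\<rceil> \<ge> 0" using n0 by simp
  ultimately show "P + nat \<lceil>c * real N'\<rceil> \<le> nat \<lceil>c * real N\<rceil>" by linarith
qed

lemma bnd_mono:
  fixes g g' \<delta> \<delta>' D :: real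
  assumes "0 \<le> g'" "g' \<le> g" "0 \<le> \<delta>'" "\<delta>' \<le> \<delta>" "\<delta> < 1" "D \<ge> 1"
  shows "- (4 * D / (1 - \<delta>')) * ln (1/2 - 1/2 * sqrt ((g' + \<delta>') / (1 + g')))
       \<le> - (4 * D / (1 - \<delta>)) * ln (1/2 - 1/2 * sqrt ((g + \<delta>) / (1 + g)))"
proof -
  define w where "w = (g + \<delta>) / (1 + g)"
  define w' where "w' = (g' + \<delta>') / (1 + g')"
  have w'0: "0 \<le> w'" unfolding w'_def using assms by simp
  have ww: "w' \<le> w"
  proof -
    have "w' \<le> (g' + \<delta>) / (1 + g')" unfolding w'_def using assms by (intro divide_right_mono) auto
    also have "\<dots> \<le> (g + \<delta>) / (1 + g)"
    proof -
      have "g' * (1 - \<delta>) \<le> g * (1 - \<delta>)" using assms by (intro mult_right_mono) auto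
      then have "(g' + \<delta>) * (1 + g) \<le> (g + \<delta>) * (1 + g')" by (simp add: algebra_simps)
      then show ?thesis using assms by (simp add: divide_simps)
    qed
    finally show ?thesis unfolding w_def .
  qed
  have w1: "w < 1" unfolding w_def using assms by (simp add: field_simps)
  define h where "h = 1/2 - 1/2 * sqrt w"
  define h' where "h' = 1/2 - 1/2 * sqrt w'"
  have h0: "0 < h" "h \<le> 1/2" unfolding h_def using w1 w'0 ww by auto
  have hh: "h \<le> h'" unfolding h_def h'_def using ww w'0 by simp
  have h'1: "h' \<le> 1/2" unfolding h'_def using w'0 by simp
  have A: "0 \<le> - ln h'" using h0 hh h'1 by simp
  have B: "- ln h' \<le> - ln h" using h0 hh by simp
  have C: "0 \<le> 4 * D / (1 - \<delta>')" using assms by simp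
  have E: "4 * D / (1 - \<delta>') \<le> 4 * D / (1 - \<delta>)" using assms by (intro divide_left_mono) auto
  have "(4 * D / (1 - \<delta>')) * (- ln h') \<le> (4 * D / (1 - \<delta>)) * (- ln h)"
    using E B C A by (intro mult_mono) auto
  then show ?thesis unfolding h_def h'_def w_def w'_def by simp
qed


locale omp =
  fixes \<Phi> :: "real^'n^'m" and x :: "real^'n" and T :: "nat \<Rightarrow> 'n set" and r :: "nat \<Rightarrow> real^'m"
  assumes run: "omp_run \<Phi> (\<Phi> *v x) T r"
begin

definition Q :: "nat \<Rightarrow> real" where "Q k = (norm (r k))\<^sup>2"

lemma T0: "T 0 = {}" using run by (simp add: omp_run_def)

lemma T_Suc: "\<exists>t. (\<forall>i. \<bar>r k \<bullet> column i \<Phi>\<bar> \<le> \<bar>r k \<bullet> column t \<Phi>\<bar>) \<and> T (Suc k) = insert t (T k)"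
  using run unfolding omp_run_def by blast

lemma LS: "\<exists>u. supp u \<subseteq> T k \<and> r k = \<Phi> *v x - \<Phi> *v u \<and>
   (\<forall>w. supp w \<subseteq> T k \<longrightarrow> norm (r k) \<le> norm (\<Phi> *v x - \<Phi> *v w))"
proof (cases k)
  case 0
  have "r 0 = \<Phi> *v x" using run by (simp add: omp_run_def)
  moreover have "supp (0::real^'n) \<subseteq> T k" by (simp add: supp_def)
  moreover have "\<forall>w. supp w \<subseteq> T k \<longrightarrow> norm (r k) \<le> norm (\<Phi> *v x - \<Phi> *v w)"
    using 0 T0 \<open>r 0 = \<Phi> *v x\<close> supp_empty by fastforce
  ultimately show ?thesis using 0 by (intro exI[of _ 0]) simp
next
  case (Suc j)
  then show ?thesis using run unfolding omp_run_def by metis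
qed

lemma T_mono_Suc: "T k \<subseteq> T (Suc k)"
  using T_Suc[of k] by auto

lemma T_mono: "k \<le> k' \<Longrightarrow> T k \<subseteq> T k'"
proof (induction k' rule: dec_induct)
  case (step n) then show ?case using T_mono_Suc[of n] by blast
qed simp

lemma Q_le: "supp w \<subseteq> T k \<Longrightarrow> Q k \<le> (norm (\<Phi> *v x - \<Phi> *v w))\<^sup>2"
  using LS[of k] unfolding Q_def by (auto intro: power_mono)

lemma Q_nonneg: "Q k \<ge> 0" by (simp add: Q_def)

lemma Q_dec: "Q (Suc k) \<le> Q k"
proof -
  obtain u where u: "supp u \<subseteq> T k" "r k = \<Phi> *v x - \<Phi> *v u" using LS[of k] by blast
  have "Q (Suc k) \<le> (norm (\<Phi> *v x - \<Phi> *v u))\<^sup>2"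
    using u(1) T_mono_Suc by (intro Q_le) auto
  then show ?thesis using u by (simp add: Q_def)
qed

lemma Q_mono: "k \<le> k' \<Longrightarrow> Q k' \<le> Q k"
  by (induction k' rule: dec_induct) (auto intro: order_trans[OF Q_dec])

lemma orth:
  assumes "i \<in> T k" shows "r k \<bullet> column i \<Phi> = 0"
proof -
  obtain u where u: "supp u \<subseteq> T k" "r k = \<Phi> *v x - \<Phi> *v u"
    "\<forall>w. supp w \<subseteq> T k \<longrightarrow> norm (r k) \<le> norm (\<Phi> *v x - \<Phi> *v w)" using LS[of k] by blast
  define a where "a = r k \<bullet> column i \<Phi>"
  define C where "C = (norm (column i \<Phi>))\<^sup>2"
  define e where "e = a / (C + 1)"
  have C0: "C \<ge> 0" by (simp add: C_def)
  have "supp (u + axis i e) \<subseteq> T k"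
    using u(1) supp_add[of u "axis i e"] supp_axis[of i e] assms by auto
  then have "norm (r k) \<le> norm (\<Phi> *v x - \<Phi> *v (u + axis i e))" using u(3) by blast
  also have "\<Phi> *v x - \<Phi> *v (u + axis i e) = r k - e *\<^sub>R column i \<Phi>"
    using u(2) by (simp add: matrix_vector_right_distrib Phi_axis)
  finally have "(norm (r k))\<^sup>2 \<le> (norm (r k - e *\<^sub>R column i \<Phi>))\<^sup>2"
    by (simp add: power_mono)
  also have "\<dots> = (norm (r k))\<^sup>2 - 2 * e * a + e\<^sup>2 * C"
    unfolding a_def C_def power2_norm_eq_inner
    by (simp add: inner_diff_left inner_diff_right inner_commute power2_eq_square algebra_simps)
  finally have "0 \<le> - 2 * e * a + e\<^sup>2 * C" by simp
  moreover have "a = e * (C + 1)" using C0 unfolding e_def by simp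
  ultimately have "0 \<le> - (e\<^sup>2 * (C + 2))" by (simp add: algebra_simps power2_eq_square)
  then have "e\<^sup>2 * (C + 2) \<le> 0" by simp
  then have "e = 0" using C0 by (simp add: mult_le_0_iff)
  then have "a = 0" using C0 unfolding e_def by simp
  then show ?thesis unfolding a_def by simp
qed

lemma col_norm: "(norm (column t \<Phi>))\<^sup>2 \<le> 1 + ric \<Phi> 1"
proof -
  have "card (supp (axis t (1::real))) \<le> 1"
    using card_mono[OF _ supp_axis[of t 1]] by simp
  from ric_upper[OF this, of \<Phi>] show ?thesis by (simp add: Phi_axis)
qed

lemma step_dec: "Q (Suc k) \<le> Q k - (r k \<bullet> column i \<Phi>)\<^sup>2 / (1 + ric \<Phi> 1)"
proof -
  obtain t where t: "\<forall>i. \<bar>r k \<bullet> column i \<Phi>\<bar> \<le> \<bar>r k \<bullet> column t \<Phi>\<bar>" "T (Suc k) = insert t (T k)"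
    using T_Suc[of k] by blast
  obtain u where u: "supp u \<subseteq> T k" "r k = \<Phi> *v x - \<Phi> *v u" using LS[of k] by blast
  define a where "a = r k \<bullet> column t \<Phi>"
  define C where "C = (norm (column t \<Phi>))\<^sup>2"
  define D where "D = 1 + ric \<Phi> 1"
  define e where "e = a / D"
  have D0: "D > 0" using ric_nonneg[of \<Phi> 1] by (simp add: D_def)
  have CD: "C \<le> D" using col_norm by (simp add: C_def D_def)
  have "supp (u + axis t e) \<subseteq> T (Suc k)"
    using u(1) supp_add[of u "axis t e"] supp_axis[of t e] t(2) by auto
  then have "Q (Suc k) \<le> (norm (\<Phi> *v x - \<Phi> *v (u + axis t e)))\<^sup>2" by (rule Q_le)
  also have "\<Phi> *v x - \<Phi> *v (u + axis t e) = r k - e *\<^sub>R column t \<Phi>"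
    using u(2) by (simp add: matrix_vector_right_distrib Phi_axis)
  also have "(norm (r k - e *\<^sub>R column t \<Phi>))\<^sup>2 = Q k - 2 * e * a + e\<^sup>2 * C"
    unfolding a_def C_def power2_norm_eq_inner Q_def
    by (simp add: inner_diff_left inner_diff_right inner_commute power2_eq_square algebra_simps)
  also have "\<dots> \<le> Q k - 2 * e * a + e\<^sup>2 * D"
    using CD by (simp add: mult_left_mono)
  also have "\<dots> = Q k - a\<^sup>2 / D"
    using D0 unfolding e_def by (simp add: field_simps power2_eq_square)
  also have "\<dots> \<le> Q k - (r k \<bullet> column i \<Phi>)\<^sup>2 / D"
  proof -
    have "(r k \<bullet> column i \<Phi>)\<^sup>2 \<le> a\<^sup>2" unfolding a_def
      using t(1) by (metis abs_le_square_iff)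
    then show ?thesis using D0 by (simp add: divide_right_mono)
  qed
  finally show ?thesis by (simp add: D_def)
qed


lemma key_step:
  assumes v: "supp v \<subseteq> T k \<union> S"
    and rip: "\<And>z. supp z \<subseteq> T k \<union> S \<Longrightarrow> (1 - \<delta>) * (norm z)\<^sup>2 \<le> (norm (\<Phi> *v z))\<^sup>2"
    and m: "card (S - T k) \<le> m"
    and QB: "Q k \<ge> (norm (\<Phi> *v x - \<Phi> *v v))\<^sup>2"
  shows "(1 - \<delta>) * (Q k - (norm (\<Phi> *v x - \<Phi> *v v))\<^sup>2) \<le> real m * (1 + ric \<Phi> 1) * (Q k - Q (Suc k))"
proof -
  define B where "B = (norm (\<Phi> *v x - \<Phi> *v v))\<^sup>2"
  obtain t where t: "\<forall>i. \<bar>r k \<bullet> column i \<Phi>\<bar> \<le> \<bar>r k \<bullet> column t \<Phi>\<bar>"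
    using T_Suc[of k] by blast
  obtain u where u: "supp u \<subseteq> T k" "r k = \<Phi> *v x - \<Phi> *v u" using LS[of k] by blast
  define R where "R = r k"
  define c where "c i = R \<bullet> column i \<Phi>" for i
  define M2 where "M2 = (c t)\<^sup>2"
  define D where "D = 1 + ric \<Phi> 1"
  have D0: "D > 0" using ric_nonneg[of \<Phi> 1] by (simp add: D_def)
  have M2Q: "M2 \<le> D * (Q k - Q (Suc k))"
    using step_dec[of k t] D0 unfolding M2_def c_def R_def D_def by (simp add: field_simps)
  have ci: "(c i)\<^sup>2 \<le> M2" for i
    using t unfolding M2_def c_def R_def by (metis abs_le_square_iff)
  define d where "d = v - u"
  have supp_d: "supp d \<subseteq> T k \<union> S" using supp_diff[of v u] v u(1) unfolding d_def by auto
  define A where "A = S - T k"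
  define p where "p = R \<bullet> (\<Phi> *v d)"
  have p_sum: "p = (\<Sum>i\<in>A. d$i * c i)"
  proof -
    have "p = (\<Sum>i\<in>UNIV. d$i * c i)" unfolding p_def c_def by (rule inner_Phi)
    also have "\<dots> = (\<Sum>i\<in>A. d$i * c i)"
    proof (rule sum.mono_neutral_right)
      show "\<forall>i\<in>UNIV - A. d $ i * c i = 0"
      proof
        fix i assume "i \<in> UNIV - A"
        then have "i \<in> T k \<or> i \<notin> supp d" using supp_d unfolding A_def by auto
        then show "d $ i * c i = 0"
          using orth[of i k] unfolding c_def R_def supp_def by auto
      qed
    qed auto
    finally show ?thesis .
  qed
  have p_up: "p\<^sup>2 \<le> (norm d)\<^sup>2 * (real m * M2)"
  proof -
    have "p\<^sup>2 \<le> (\<Sum>i\<in>A. (d$i)\<^sup>2) * (\<Sum>i\<in>A. (c i)\<^sup>2)"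
      unfolding p_sum by (rule Cauchy_Schwarz_ineq_sum)
    also have "\<dots> \<le> (norm d)\<^sup>2 * (real m * M2)"
    proof (rule mult_mono)
      show "(\<Sum>i\<in>A. (d$i)\<^sup>2) \<le> (norm d)\<^sup>2"
        unfolding norm_sq_sum by (rule sum_mono2) auto
      have "(\<Sum>i\<in>A. (c i)\<^sup>2) \<le> real (card A) * M2"
        using sum_bounded_above[of A "\<lambda>i. (c i)\<^sup>2" M2] ci by simp
      also have "\<dots> \<le> real m * M2"
        using m ci[of t] unfolding A_def by (intro mult_right_mono) (auto intro: order_trans[OF zero_le_power2])
      finally show "(\<Sum>i\<in>A. (c i)\<^sup>2) \<le> real m * M2" .
    qed (auto intro: sum_nonneg)
    finally show ?thesis .
  qed
  define X where "X = (norm (\<Phi> *v d))\<^sup>2"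
  have Bid: "B = Q k - 2 * p + X"
  proof -
    have "\<Phi> *v x - \<Phi> *v v = R - \<Phi> *v d"
      unfolding R_def d_def u(2) by (simp add: matrix_vector_mult_diff_distrib)
    then show ?thesis unfolding B_def X_def Q_def p_def R_def power2_norm_eq_inner
      by (simp add: inner_diff_left inner_diff_right inner_commute)
  qed
  have X_low: "(1 - \<delta>) * (norm d)\<^sup>2 \<le> X" unfolding X_def by (rule rip[OF supp_d])
  have QB': "Q k - B \<ge> 0" using QB unfolding B_def by simp
  have p_low: "(Q k - B) * X \<le> p\<^sup>2"
  proof -
    have "(Q k - B + X)\<^sup>2 - 4 * ((Q k - B) * X) = (Q k - B - X)\<^sup>2"
      by (simp add: power2_eq_square algebra_simps)
    then have "4 * ((Q k - B) * X) \<le> (Q k - B + X)\<^sup>2"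
      by (metis diff_ge_0_iff_ge zero_le_power2)
    also have "Q k - B + X = 2 * p" using Bid by simp
    finally show ?thesis by (simp add: power2_eq_square)
  qed
  have main: "(1 - \<delta>) * (Q k - B) * (norm d)\<^sup>2 \<le> (norm d)\<^sup>2 * (real m * M2)"
  proof -
    have "(1 - \<delta>) * (Q k - B) * (norm d)\<^sup>2 = (Q k - B) * ((1 - \<delta>) * (norm d)\<^sup>2)" by simp
    also have "\<dots> \<le> (Q k - B) * X" using X_low QB' by (rule mult_left_mono)
    also have "\<dots> \<le> p\<^sup>2" by (rule p_low)
    finally show ?thesis using p_up by simp
  qed
  have Qdec: "Q (Suc k) \<le> Q k" by (rule Q_dec)
  show ?thesis
  proof (cases "d = 0")
    case True
    then have "v = u" unfolding d_def by simp
    then have "B = Q k" unfolding B_def Q_def u(2) by simp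
    then show ?thesis using Qdec D0 unfolding B_def D_def by (simp add: mult_nonneg_nonneg)
  next
    case False
    then have "(norm d)\<^sup>2 > 0" by simp
    with main have "(1 - \<delta>) * (Q k - B) \<le> real m * M2" by (simp add: mult.commute)
    also have "\<dots> \<le> real m * (D * (Q k - Q (Suc k)))" using M2Q by (simp add: mult_left_mono)
    finally show ?thesis unfolding B_def D_def by (simp add: mult.assoc)
  qed
qed


lemma stage_E:
  assumes v: "supp v \<subseteq> T k \<union> S"
    and rip: "\<And>t z. k \<le> t \<Longrightarrow> t < k + p \<Longrightarrow> supp z \<subseteq> T t \<union> S \<Longrightarrow> (1 - \<delta>) * (norm z)\<^sup>2 \<le> (norm (\<Phi> *v z))\<^sup>2"
    and cardS: "card S \<le> sz" and sz1: "sz \<ge> 1"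
    and dl: "0 \<le> \<delta>" "\<delta> < 1"
  shows "max (Q (k + p) - (norm (\<Phi> *v x - \<Phi> *v v))\<^sup>2) 0
         \<le> (1 - ((1 - \<delta>) / (1 + ric \<Phi> 1)) / sz) ^ p * max (Q k - (norm (\<Phi> *v x - \<Phi> *v v))\<^sup>2) 0"
  using rip
proof (induction p)
  case 0 then show ?case by simp
next
  case (Suc p)
  define B where "B = (norm (\<Phi> *v x - \<Phi> *v v))\<^sup>2"
  define D where "D = 1 + ric \<Phi> 1"
  define \<beta> where "\<beta> = (1 - \<delta>) / D"
  define \<kappa> where "\<kappa> = 1 - \<beta> / sz"
  define E where "E t = max (Q t - B) 0" for t
  have D1: "D \<ge> 1" using ric_nonneg[of \<Phi> 1] by (simp add: D_def)
  have b0: "\<beta> \<ge> 0" "\<beta> \<le> 1" using D1 dl unfolding \<beta>_def by (auto simp: field_simps)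
  have k0: "\<kappa> \<ge> 0" "\<kappa> \<le> 1" using b0 sz1 unfolding \<kappa>_def by (auto simp: field_simps)
  have IH: "E (k + p) \<le> \<kappa> ^ p * E k"
    using Suc.IH Suc.prems unfolding E_def \<kappa>_def \<beta>_def B_def D_def by force
  define t where "t = k + p"
  have E0: "E t' \<ge> 0" for t' by (simp add: E_def)
  have step: "E (Suc t) \<le> \<kappa> * E t"
  proof (cases "Q t < B")
    case True
    then have "Q (Suc t) \<le> B" using Q_dec[of t] by simp
    then show ?thesis using E0[of t] k0 by (simp add: E_def)
  next
    case False
    show ?thesis
    proof (cases "S \<subseteq> T t")
      case True
      have "supp v \<subseteq> T t" using v True T_mono[of k t] unfolding t_def by auto
      then have "Q t \<le> B" unfolding B_def by (rule Q_le)
      then have "Q (Suc t) \<le> B" using Q_dec[of t] by simp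
      then show ?thesis using E0[of t] k0 by (simp add: E_def)
    next
      case False2: False
      define m where "m = card (S - T t)"
      have m1: "m \<ge> 1" using False2 unfolding m_def by (simp add: Suc_le_eq card_gt_0_iff)
      have msz: "m \<le> sz" using card_mono[of S "S - T t"] cardS unfolding m_def by auto
      have vt: "supp v \<subseteq> T t \<union> S" using v T_mono[of k t] unfolding t_def by auto
      have ripT: "\<And>z. supp z \<subseteq> T t \<union> S \<Longrightarrow> (1 - \<delta>) * (norm z)\<^sup>2 \<le> (norm (\<Phi> *v z))\<^sup>2"
        using Suc.prems[of t] unfolding t_def by simp
      have QB: "Q t \<ge> B" using False by simp
      have ks: "(1 - \<delta>) * (Q t - B) \<le> real m * D * (Q t - Q (Suc t))"
        using key_step[OF vt ripT _ QB[unfolded B_def], of m] unfolding B_def D_def m_def by simp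
      have "Q (Suc t) - B \<le> (1 - \<beta> / m) * (Q t - B)"
      proof -
        have "\<beta> * (Q t - B) \<le> real m * (Q t - Q (Suc t))"
          using ks D1 unfolding \<beta>_def by (simp add: field_simps mult.commute mult.left_commute)
        then show ?thesis using m1 by (simp add: field_simps)
      qed
      also have "\<dots> \<le> \<kappa> * (Q t - B)"
      proof (rule mult_right_mono)
        have "\<beta> / sz \<le> \<beta> / m" using m1 msz b0 by (intro divide_left_mono) auto
        then show "1 - \<beta> / real m \<le> \<kappa>" unfolding \<kappa>_def by simp
      qed (use QB in simp)
      finally have "Q (Suc t) - B \<le> \<kappa> * (Q t - B)" .
      then show ?thesis using QB k0 by (simp add: E_def)
    qed
  qed
  have "E (k + Suc p) \<le> \<kappa> * E (k + p)" using step unfolding t_def by simp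
  also have "\<dots> \<le> \<kappa> * (\<kappa> ^ p * E k)" using IH k0(1) by (rule mult_left_mono)
  finally show ?case unfolding E_def \<kappa>_def \<beta>_def B_def D_def by (simp add: mult.assoc)
qed

lemma stage:
  assumes v: "supp v \<subseteq> T k \<union> S"
    and rip: "\<And>t z. k \<le> t \<Longrightarrow> t < k + p \<Longrightarrow> supp z \<subseteq> T t \<union> S \<Longrightarrow> (1 - \<delta>) * (norm z)\<^sup>2 \<le> (norm (\<Phi> *v z))\<^sup>2"
    and cardS: "card S \<le> sz" and sz1: "sz \<ge> 1"
    and dl: "0 \<le> \<delta>" "\<delta> < 1"
    and q: "0 \<le> q" "q \<le> 1"
    and kq: "(1 - ((1 - \<delta>) / (1 + ric \<Phi> 1)) / sz) ^ p \<le> q \<or> S \<subseteq> T k"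
  shows "Q (k + p) \<le> (1 - q) * (norm (\<Phi> *v x - \<Phi> *v v))\<^sup>2 + q * Q k"
proof -
  define B where "B = (norm (\<Phi> *v x - \<Phi> *v v))\<^sup>2"
  have E: "max (Q (k + p) - B) 0 \<le> (1 - ((1 - \<delta>) / (1 + ric \<Phi> 1)) / sz) ^ p * max (Q k - B) 0"
    unfolding B_def by (rule stage_E[OF v _ cardS sz1 dl]) (rule rip)
  have Qm: "Q (k + p) \<le> Q k" by (rule Q_mono) simp
  show ?thesis
  proof (cases "Q k \<le> B")
    case True
    have "(1 - q) * B + q * Q k - Q k = (1 - q) * (B - Q k)" by (simp add: algebra_simps)
    also have "\<dots> \<ge> 0" using True q by simp
    finally have "Q k \<le> (1 - q) * B + q * Q k" by simp
    then show ?thesis using Qm unfolding B_def by simp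
  next
    case False
    then have nS: "(1 - ((1 - \<delta>) / (1 + ric \<Phi> 1)) / sz) ^ p \<le> q"
    proof -
      have "\<not> S \<subseteq> T k"
      proof
        assume "S \<subseteq> T k"
        then have "supp v \<subseteq> T k" using v by auto
        then have "Q k \<le> B" unfolding B_def by (rule Q_le)
        with False show False by simp
      qed
      then show ?thesis using kq by blast
    qed
    have "Q (k + p) - B \<le> max (Q (k + p) - B) 0" by simp
    also have "\<dots> \<le> (1 - ((1 - \<delta>) / (1 + ric \<Phi> 1)) / sz) ^ p * max (Q k - B) 0" by (rule E)
    also have "\<dots> = (1 - ((1 - \<delta>) / (1 + ric \<Phi> 1)) / sz) ^ p * (Q k - B)" using False by simp
    also have "\<dots> \<le> q * (Q k - B)"
      using nS False by (intro mult_right_mono) auto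
    finally show ?thesis unfolding B_def by (simp add: algebra_simps)
  qed
qed


lemma Bbound:
  assumes "A \<subseteq> supp x"
  shows "(norm (\<Phi> *v x - \<Phi> *v rst (supp x - A) x))\<^sup>2 \<le> (1 + ric \<Phi> (card A)) * (\<Sum>i\<in>A. (x$i)\<^sup>2)"
proof -
  have e: "x - rst (supp x - A) x = rst A x"
    using assms by (auto simp: vec_eq_iff rst_def supp_def)
  have "\<Phi> *v x - \<Phi> *v rst (supp x - A) x = \<Phi> *v rst A x"
    by (metis e matrix_vector_mult_diff_distrib)
  moreover have "card (supp (rst A x)) \<le> card A"
    by (rule card_mono[OF _ supp_rst]) simp
  ultimately show ?thesis using ric_upper[of "rst A x" "card A" \<Phi>] by (simp add: norm_rst)
qed

lemma lowQ:
  assumes "ric \<Phi> (card (supp x \<union> T k)) \<le> 1"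
  shows "(1 - ric \<Phi> (card (supp x \<union> T k))) * (\<Sum>i\<in>supp x - T k. (x$i)\<^sup>2) \<le> Q k"
proof -
  obtain u where u: "supp u \<subseteq> T k" "r k = \<Phi> *v x - \<Phi> *v u" using LS[of k] by blast
  have rk: "r k = \<Phi> *v (x - u)" using u(2) by (simp add: matrix_vector_mult_diff_distrib)
  have "card (supp (x - u)) \<le> card (supp x \<union> T k)"
    using supp_diff[of x u] u(1) by (intro card_mono) auto
  then have "(1 - ric \<Phi> (card (supp x \<union> T k))) * (norm (x - u))\<^sup>2 \<le> Q k"
    unfolding Q_def rk by (rule ric_lower)
  moreover have "(\<Sum>i\<in>supp x - T k. (x$i)\<^sup>2) \<le> (norm (x - u))\<^sup>2"
  proof -
    have "(\<Sum>i\<in>supp x - T k. (x$i)\<^sup>2) = (\<Sum>i\<in>supp x - T k. ((x - u)$i)\<^sup>2)"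
    proof (rule sum.cong)
      fix i assume "i \<in> supp x - T k"
      then have "u $ i = 0" using u(1) by (auto simp: supp_def)
      then show "(x$i)\<^sup>2 = ((x - u)$i)\<^sup>2" by simp
    qed simp
    also have "\<dots> \<le> (\<Sum>i\<in>UNIV. ((x - u)$i)\<^sup>2)" by (rule sum_mono2) auto
    finally show ?thesis by (simp add: norm_sq_sum)
  qed
  ultimately show ?thesis using assms
    by (meson diff_ge_0_iff_ge mult_left_mono order_trans)
qed


lemma failure:
  assumes M: "M = supp x - T k" and N: "N = card M"
    and rl: "ric \<Phi> (card (supp x \<union> T (k + P))) \<le> \<delta>" and dl: "\<delta> \<le> 1"
    and d: "d \<le> N"
    and lt: "Q (k + P) < (1 - \<delta>) * tailv (\<lambda>i. (x$i)\<^sup>2) M (N - d + 1)"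
  shows "card (supp x - T (k + P)) + d \<le> N"
proof (rule ccontr)
  assume "\<not> ?thesis"
  then have c: "N - d + 1 \<le> card (supp x - T (k + P))" using d by simp
  have sub: "supp x - T (k + P) \<subseteq> M" using M T_mono[of k "k + P"] by auto
  have "tailv (\<lambda>i. (x$i)\<^sup>2) M (N - d + 1) \<le> (\<Sum>i\<in>supp x - T (k + P). (x$i)\<^sup>2)"
    by (rule tailv_ge[OF _ sub c]) auto
  then have "(1 - \<delta>) * tailv (\<lambda>i. (x$i)\<^sup>2) M (N - d + 1) \<le> (1 - \<delta>) * (\<Sum>i\<in>supp x - T (k + P). (x$i)\<^sup>2)"
    using dl by (intro mult_left_mono) auto
  also have "\<dots> \<le> (1 - ric \<Phi> (card (supp x \<union> T (k + P)))) * (\<Sum>i\<in>supp x - T (k + P). (x$i)\<^sup>2)"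
    using rl by (intro mult_right_mono) (auto intro: sum_nonneg)
  also have "\<dots> \<le> Q (k + P)" using rl dl by (intro lowQ) simp
  finally show False using lt by simp
qed

lemma stage_tail:
  assumes M: "M = supp x - T k" and N: "N = card M" and mt: "mt \<le> N"
    and k0: "k \<le> k0"
    and rip: "\<And>t z. k0 \<le> t \<Longrightarrow> t < k0 + p \<Longrightarrow> supp z \<subseteq> supp x \<union> T t \<Longrightarrow> (1 - \<delta>) * (norm z)\<^sup>2 \<le> (norm (\<Phi> *v z))\<^sup>2"
    and dl: "0 \<le> \<delta>" "\<delta> < 1" and q: "0 \<le> q" "q \<le> 1"
    and sz: "sz \<ge> 1" "N - mt \<le> sz"
    and kq: "(1 - ((1 - \<delta>) / (1 + ric \<Phi> 1)) / sz) ^ p \<le> q \<or> mt = N"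
    and g: "ric \<Phi> mt \<le> g"
  shows "Q (k0 + p) \<le> (1 - q) * (1 + g) * tailv (\<lambda>i. (x$i)\<^sup>2) M mt + q * Q k0"
proof -
  define f where "f i = (x$i)\<^sup>2" for i
  have finM: "finite M" by simp
  obtain A where A: "A \<subseteq> M" "card A = mt" "sum f A = tailv f M mt"
    using tailv_wit[OF finM, of mt f] mt N by auto
  define S where "S = M - A"
  define v where "v = rst (supp x - A) x"
  have cardS: "card S = N - mt" unfolding S_def using A N by (simp add: card_Diff_subset)
  have AX: "A \<subseteq> supp x" using A M by auto
  have vsupp: "supp v \<subseteq> T k0 \<union> S"
  proof -
    have "supp v \<subseteq> supp x - A" unfolding v_def by (rule supp_rst)
    also have "\<dots> \<subseteq> T k0 \<union> S" using T_mono[OF k0] unfolding S_def M by auto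
    finally show ?thesis .
  qed
  have rip': "(1 - \<delta>) * (norm z)\<^sup>2 \<le> (norm (\<Phi> *v z))\<^sup>2"
    if "k0 \<le> t" "t < k0 + p" "supp z \<subseteq> T t \<union> S" for t z
    using rip[OF that(1,2)] that(3) unfolding S_def M by auto
  have kq': "(1 - ((1 - \<delta>) / (1 + ric \<Phi> 1)) / sz) ^ p \<le> q \<or> S \<subseteq> T k0"
  proof (cases "mt = N")
    case True
    then have "A = M" using A N by (intro card_subset_eq) auto
    then show ?thesis unfolding S_def by simp
  next
    case False then show ?thesis using kq by simp
  qed
  have st: "Q (k0 + p) \<le> (1 - q) * (norm (\<Phi> *v x - \<Phi> *v v))\<^sup>2 + q * Q k0"
    by (rule stage[OF vsupp rip' _ sz(1) dl q kq']) (use cardS sz in auto)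
  have B: "(norm (\<Phi> *v x - \<Phi> *v v))\<^sup>2 \<le> (1 + g) * tailv f M mt"
  proof -
    have "(norm (\<Phi> *v x - \<Phi> *v v))\<^sup>2 \<le> (1 + ric \<Phi> (card A)) * sum f A"
      unfolding v_def f_def by (rule Bbound[OF AX])
    also have "\<dots> \<le> (1 + g) * sum f A"
      using A(2) g by (intro mult_right_mono) (auto simp: f_def intro: sum_nonneg)
    finally show ?thesis using A by simp
  qed
  have "(1 - q) * (norm (\<Phi> *v x - \<Phi> *v v))\<^sup>2 \<le> (1 - q) * ((1 + g) * tailv f M mt)"
    using B q by (intro mult_left_mono) auto
  then show ?thesis using st unfolding f_def by (simp add: mult.assoc)
qed

lemma progress:
  assumes c1: "c > 1"
    and N: "N = card (supp x - T k)" and N1: "N \<ge> 1"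
    and ricle: "\<And>t. t \<le> k + nat \<lfloor>c * real N\<rfloor> \<Longrightarrow> ric \<Phi> (card (supp x \<union> T t)) \<le> \<delta>"
    and dl: "0 \<le> \<delta>" "\<delta> < 1"
    and gN: "ric \<Phi> N \<le> g" and g0: "0 \<le> g"
    and q: "q = 1/2 - 1/2 * sqrt ((g + \<delta>) / (1 + g))"
    and cb: "c \<ge> - (4 * (1 + ric \<Phi> 1) / (1 - \<delta>)) * ln q"
  shows "\<exists>P d. 1 \<le> d \<and> real P \<le> c * real d \<and> card (supp x - T (k + P)) + d \<le> N"
proof -
  define M where "M = supp x - T k"
  define f where "f i = (x$i)\<^sup>2" for i
  define tv where "tv m = tailv f M m" for m
  define D where "D = 1 + ric \<Phi> 1"
  define \<beta> where "\<beta> = (1 - \<delta>) / D"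
  define w where "w = (g + \<delta>) / (1 + g)"
  have D1: "D \<ge> 1" using ric_nonneg[of \<Phi> 1] by (simp add: D_def)
  have w0: "0 \<le> w" "w < 1" using g0 dl unfolding w_def by (auto simp: field_simps)
  have sw: "0 \<le> sqrt w" "sqrt w < 1" using w0 by auto
  have qw: "q = 1/2 - 1/2 * sqrt w" using q unfolding w_def .
  have q0: "0 < q" "q \<le> 1/2" using sw qw by auto
  have qq: "4 * q * (1 - q) = (1 - \<delta>) / (1 + g)"
  proof -
    have "4 * q * (1 - q) = 1 - (sqrt w)\<^sup>2" unfolding qw by (simp add: algebra_simps power2_eq_square)
    also have "\<dots> = 1 - w" using w0 by simp
    also have "\<dots> = (1 - \<delta>) / (1 + g)" unfolding w_def using g0 by (simp add: field_simps)
    finally show ?thesis .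
  qed
  have b: "0 < \<beta>" "\<beta> \<le> 1" using D1 dl unfolding \<beta>_def by (auto simp: field_simps)
  have rip: "(1 - \<delta>) * (norm z)\<^sup>2 \<le> (norm (\<Phi> *v z))\<^sup>2"
    if "t \<le> k + nat \<lfloor>c * real N\<rfloor>" "supp z \<subseteq> supp x \<union> T t" for t z
  proof -
    have "card (supp z) \<le> card (supp x \<union> T t)" using that(2) by (intro card_mono) auto
    then have "(1 - ric \<Phi> (card (supp x \<union> T t))) * (norm z)\<^sup>2 \<le> (norm (\<Phi> *v z))\<^sup>2"
      by (rule ric_lower)
    moreover have "(1 - \<delta>) * (norm z)\<^sup>2 \<le> (1 - ric \<Phi> (card (supp x \<union> T t))) * (norm z)\<^sup>2"
      using ricle[OF that(1)] by (intro mult_right_mono) auto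
    ultimately show ?thesis by linarith
  qed
  have ricM: "j \<le> N \<Longrightarrow> ric \<Phi> j \<le> g" for j using ric_mono[of j N \<Phi>] gN by simp
  have cardM: "card M = N" unfolding M_def N ..
  have finM: "finite M" by simp
  have fpos: "i \<in> M \<Longrightarrow> f i > 0" for i unfolding M_def f_def supp_def by auto
  have f0: "f i \<ge> 0" for i unfolding f_def by simp
  have tvN: "tv N = sum f M" unfolding tv_def using tailv_full[OF finM, of f] cardM by simp
  have tv0: "tv 0 = 0" unfolding tv_def by (rule tailv_zero[OF finM])
  have tvnn: "m \<le> N \<Longrightarrow> tv m \<ge> 0" for m unfolding tv_def using tailv_nonneg[OF finM, of m f] cardM f0 by auto
  have cN: "c * real N \<ge> c" using c1 N1 by simp
  have fl1: "1 \<le> nat \<lfloor>c * real N\<rfloor>" using cN c1 by linarith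
  have base: "Q k \<le> (1 + g) * sum f M"
  proof -
    have "supp (rst (supp x - M) x) \<subseteq> T k"
      using supp_rst[of "supp x - M" x] unfolding M_def by auto
    then have "Q k \<le> (norm (\<Phi> *v x - \<Phi> *v rst (supp x - M) x))\<^sup>2" by (rule Q_le)
    also have "\<dots> \<le> (1 + ric \<Phi> (card M)) * sum f M"
      unfolding f_def by (rule Bbound) (simp add: M_def)
    also have "\<dots> \<le> (1 + g) * sum f M"
      using ricM[of "card M"] cardM f0 by (intro mult_right_mono sum_nonneg) auto
    finally show ?thesis .
  qed
  show ?thesis
  proof (cases "q = 1/2")
    case True
    then have "sqrt w = 0" using qw by simp
    then have "w = 0" by simp
    then have "g + \<delta> = 0" unfolding w_def using g0 by (simp add: field_simps)
    then have gd0: "g = 0" "\<delta> = 0" using g0 dl by auto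
    have "ric \<Phi> 1 \<le> g" using ricM N1 by simp
    then have r1: "ric \<Phi> 1 = 0" using ric_nonneg[of \<Phi> 1] gd0 by simp
    have st: "Q (k + 1) \<le> (1 - 0) * (1 + g) * tailv f M (N - 1) + 0 * Q k"
      unfolding f_def
    proof (rule stage_tail[OF M_def cardM[symmetric], where sz = 1])
      show "(1 - (1 - \<delta>) / (1 + ric \<Phi> 1) / real 1) ^ 1 \<le> 0 \<or> N - 1 = N"
        using gd0 r1 by simp
      show "ric \<Phi> (N - 1) \<le> g" using ricM by simp
      fix t z assume "k \<le> t" "t < k + 1" "supp z \<subseteq> supp x \<union> T t"
      then show "(1 - \<delta>) * (norm z)\<^sup>2 \<le> (norm (\<Phi> *v z))\<^sup>2"
        using fl1 by (intro rip[of t]) auto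
    qed (use dl in auto)
    obtain i0 where i0: "i0 \<in> M" using N1 cardM by (metis card.empty not_one_le_zero ex_in_conv)
    have "tv (N - 1) \<le> sum f (M - {i0})"
      unfolding tv_def using i0 cardM by (intro tailv_le) auto
    also have "\<dots> < sum f M"
      using i0 fpos[OF i0] by (simp add: sum_diff1)
    finally have lt: "Q (k + 1) < (1 - \<delta>) * tv (N - 1 + 1)"
      using st gd0 tvN N1 unfolding tv_def by simp
    have "card (supp x - T (k + 1)) + 1 \<le> N"
      by (rule failure[OF M_def cardM[symmetric] _ _ _ lt[unfolded tv_def f_def]])
         (use ricle fl1 dl N1 in auto)
    then show ?thesis using c1 by (intro exI[of _ 1]) auto
  next
    case False
    then have q2: "q < 1/2" using q0 by simp
    define lam where "lam = - ln q / \<beta>"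
    have lnq: "ln q < 0" using q0 by simp
    have lam0: "lam > 0" unfolding lam_def using lnq b by (simp add: divide_neg_pos)
    have c4: "c \<ge> 4 * lam"
    proof -
      have "- (4 * (1 + ric \<Phi> 1) / (1 - \<delta>)) * ln q = 4 * lam"
        unfolding lam_def \<beta>_def D_def using dl by (simp add: field_simps)
      then show ?thesis using cb by simp
    qed
    have explam: "exp (- \<beta> * lam) = q" unfolding lam_def using b q0 by simp
    define sz where "sz l = (if l = 0 then 0 else nat \<lfloor>(2::real) ^ (l - 1) / lam\<rfloor>)" for l :: nat
    define u where "u l = tv (N - sz l)" for l
    have u0: "u l \<ge> 0" for l unfolding u_def by (rule tvnn) simp
    have ex: "\<exists>l. 1 \<le> l \<and> u l \<le> 2 * q * u (l - 1)"
    proof -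
      obtain n where n: "real N * lam < 2 ^ n" using real_arch_pow[of 2 "real N * lam"] by auto
      have "real N < 2 ^ n / lam" using n lam0 by (simp add: field_simps)
      then have "N \<le> sz (Suc n)" unfolding sz_def by simp linarith
      then have "u (Suc n) = 0" unfolding u_def using tv0 by simp
      then show ?thesis using u0[of n] q0 by (intro exI[of _ "Suc n"]) auto
    qed
    define L where "L = (LEAST l. 1 \<le> l \<and> u l \<le> 2 * q * u (l - 1))"
    have L: "1 \<le> L" "u L \<le> 2 * q * u (L - 1)"
      using LeastI_ex[OF ex] unfolding L_def by auto
    have ult: "2 * q * u (l - 1) < u l" if "1 \<le> l" "l < L" for l
      using not_less_Least[of l "\<lambda>l. 1 \<le> l \<and> u l \<le> 2 * q * u (l - 1)"] that unfolding L_def by auto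
    have upos: "u (L - 1) > 0"
    proof (cases "L = 1")
      case True
      then have "u (L - 1) = sum f M" unfolding u_def sz_def using tvN by simp
      also have "\<dots> > 0"
      proof (rule sum_pos[OF finM])
        show "M \<noteq> {}" using N1 cardM by auto
      qed (use fpos in auto)
      finally show ?thesis .
    next
      case False
      then have "2 * q * u (L - 1 - 1) < u (L - 1)" using L by (intro ult) auto
      moreover have "2 * q * u (L - 1 - 1) \<ge> 0" using u0 q0 by simp
      ultimately show ?thesis by linarith
    qed
    have szL: "sz (L - 1) + 1 \<le> N"
    proof (rule ccontr)
      assume "\<not> ?thesis"
      then have "u (L - 1) = 0" unfolding u_def using tv0 by (simp add: not_le)
      then show False using upos by simp
    qed
    define d where "d = sz (L - 1) + 1"
    define P where "P = (2::nat) ^ L - 1"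
    have budget: "real P \<le> c * real d"
    proof (cases "L = 1")
      case True
      then show ?thesis unfolding P_def d_def sz_def using c1 by simp
    next
      case False
      then have L2: "L \<ge> 2" using L by simp
      have "sz (L - 1) = nat \<lfloor>(2::real) ^ (L - 2) / lam\<rfloor>" unfolding sz_def using L2
        by (simp add: diff_diff_add numeral_2_eq_2)
      moreover have "(2::real) ^ (L - 2) / lam \<ge> 0" using lam0 by simp
      ultimately have "real (sz (L - 1)) > (2::real) ^ (L - 2) / lam - 1" by linarith
      then have dgt: "real d > (2::real) ^ (L - 2) / lam" unfolding d_def by simp
      have "real P < 2 ^ L" unfolding P_def by (simp add: of_nat_diff)
      also have "(2::real) ^ L = 4 * lam * ((2::real) ^ (L - 2) / lam)"
      proof -
        obtain j where j: "L = j + 2" using L2 by (metis add.commute le_Suc_ex)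
        show ?thesis using lam0 unfolding j by simp
      qed
      also have "\<dots> \<le> 4 * lam * real d" using dgt lam0 by (intro mult_left_mono) auto
      also have "\<dots> \<le> c * real d" using c4 by (intro mult_right_mono) auto
      finally show ?thesis by simp
    qed
    have PN: "P \<le> nat \<lfloor>c * real N\<rfloor>"
    proof -
      have "c * real d \<le> c * real N" using szL c1 unfolding d_def by (intro mult_left_mono) auto
      then have "real P \<le> c * real N" using budget by simp
      then show ?thesis by (simp add: le_nat_floor)
    qed
    define K where "K l = k + (2 ^ l - 1)" for l :: nat
    have KL: "K L = k + P" unfolding K_def P_def ..
    have Kmono: "l \<le> L \<Longrightarrow> K l \<le> K L" for l
      unfolding K_def by (simp add: diff_le_mono power_increasing)
    have Ksuc: "1 \<le> l \<Longrightarrow> K l = K (l - 1) + 2 ^ (l - 1)" for l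
    proof -
      assume l: "1 \<le> l"
      then have "(2::nat) ^ l = 2 * 2 ^ (l - 1)" by (metis Suc_diff_1 less_le_trans power_Suc zero_less_one)
      moreover have "(1::nat) \<le> 2 ^ (l - 1)" by simp
      ultimately show ?thesis unfolding K_def by simp
    qed
    have stage_l: "Q (K l) \<le> (1 - q) * (1 + g) * u l + q * Q (K (l - 1))" if l: "1 \<le> l" "l \<le> L" for l
    proof -
      have "Q (K (l - 1) + 2 ^ (l - 1)) \<le> (1 - q) * (1 + g) * tailv f M (N - sz l) + q * Q (K (l - 1))"
        unfolding f_def
      proof (rule stage_tail[OF M_def cardM[symmetric], where sz = "max 1 (sz l)"])
        show "k \<le> K (l - 1)" unfolding K_def by (rule le_add1)
        show "ric \<Phi> (N - sz l) \<le> g" using ricM by simp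
        show "(1 - (1 - \<delta>) / (1 + ric \<Phi> 1) / real (max 1 (sz l))) ^ 2 ^ (l - 1) \<le> q \<or> N - sz l = N"
        proof (cases "sz l = 0")
          case True then show ?thesis by simp
        next
          case False
          have "real (sz l) \<le> real (2 ^ (l - 1)) / lam"
            unfolding sz_def using l False by (simp add: sz_def)
          then have "(1 - \<beta> / real (sz l)) ^ 2 ^ (l - 1) \<le> exp (- \<beta> * lam)"
            using b False lam0 by (intro pow_exp_le) auto
          then show ?thesis using False explam unfolding \<beta>_def D_def by (simp add: max_def)
        qed
        fix t z assume t: "K (l - 1) \<le> t" "t < K (l - 1) + 2 ^ (l - 1)" "supp z \<subseteq> supp x \<union> T t"
        have "t \<le> K L" using t(2) Ksuc[OF l(1)] Kmono[OF l(2)] by simp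
        then have "t \<le> k + nat \<lfloor>c * real N\<rfloor>" using KL PN by simp
        then show "(1 - \<delta>) * (norm z)\<^sup>2 \<le> (norm (\<Phi> *v z))\<^sup>2" using t(3) by (rule rip)
      qed (use dl q0 in auto)
      then show ?thesis unfolding u_def tv_def using Ksuc[OF l(1)] by simp
    qed
    have chain: "Q (K L) < (1 + g) * (4 * q * (1 - q)) * u (L - 1)"
    proof (rule chain_abstract[where Qs = "\<lambda>l. Q (K l)" and u = u])
      show "Q (K 0) \<le> (1 + g) * u 0"
        using base tvN unfolding K_def u_def sz_def by simp
    qed (use q0 q2 g0 L ult u0 stage_l upos in auto)
    also have "(1 + g) * (4 * q * (1 - q)) = 1 - \<delta>" using qq g0 by simp
    finally have lt0: "Q (k + P) < (1 - \<delta>) * tv (N - sz (L - 1))"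
      unfolding KL u_def by simp
    have e: "N - d + 1 = N - sz (L - 1)" using szL unfolding d_def by simp
    have lt: "Q (k + P) < (1 - \<delta>) * tv (N - d + 1)" using lt0 unfolding e .
    have "card (supp x - T (k + P)) + d \<le> N"
      by (rule failure[OF M_def cardM[symmetric] _ _ _ lt[unfolded tv_def f_def]])
         (use ricle PN dl szL in \<open>auto simp: d_def\<close>)
    then show ?thesis using budget by (intro exI[of _ P] exI[of _ d]) (auto simp: d_def)
  qed
qed


lemma main:
  assumes c1: "c > 1"
  shows "\<forall>k. card (supp x - T k) = N \<longrightarrow>
    ric \<Phi> (card (supp x \<union> T (k + nat \<lfloor>c * real N\<rfloor>))) < 1 \<longrightarrow>
    c \<ge> - (4 * (1 + ric \<Phi> 1) / (1 - ric \<Phi> (card (supp x \<union> T (k + nat \<lfloor>c * real N\<rfloor>))))) *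
              ln (1/2 - 1/2 * sqrt ((ric \<Phi> N + ric \<Phi> (card (supp x \<union> T (k + nat \<lfloor>c * real N\<rfloor>))))
                 / (1 + ric \<Phi> N))) \<longrightarrow>
    supp x \<subseteq> T (k + nat \<lceil>c * real N\<rceil>)"
proof (induction N rule: less_induct)
  case (less N)
  show ?case
  proof (intro allI impI)
    fix k
    define s where "s = card (supp x \<union> T (k + nat \<lfloor>c * real N\<rfloor>))"
    assume N: "card (supp x - T k) = N"
      and rs: "ric \<Phi> (card (supp x \<union> T (k + nat \<lfloor>c * real N\<rfloor>))) < 1"
      and cb: "c \<ge> - (4 * (1 + ric \<Phi> 1) / (1 - ric \<Phi> (card (supp x \<union> T (k + nat \<lfloor>c * real N\<rfloor>))))) *
              ln (1/2 - 1/2 * sqrt ((ric \<Phi> N + ric \<Phi> (card (supp x \<union> T (k + nat \<lfloor>c * real N\<rfloor>))))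
                 / (1 + ric \<Phi> N)))"
    show "supp x \<subseteq> T (k + nat \<lceil>c * real N\<rceil>)"
    proof (cases "N = 0")
      case True
      then have "supp x \<subseteq> T k" using N by auto
      then show ?thesis using T_mono[of k "k + nat \<lceil>c * real N\<rceil>"] by auto
    next
      case False
      then have N1: "N \<ge> 1" by simp
      have ricle: "ric \<Phi> (card (supp x \<union> T t)) \<le> ric \<Phi> s" if "t \<le> k + nat \<lfloor>c * real N\<rfloor>" for t
        unfolding s_def using T_mono[OF that] by (intro ric_mono card_mono) auto
      obtain P d where Pd: "1 \<le> d" "real P \<le> c * real d" "card (supp x - T (k + P)) + d \<le> N"
        using progress[OF c1 N[symmetric] N1 ricle _ rs[folded s_def] order_refl ric_nonneg refl cb[folded s_def]]
          ric_nonneg by blast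
      define N' where "N' = card (supp x - T (k + P))"
      have N'N: "N' < N" using Pd unfolding N'_def by simp
      have le: "real P + c * real N' \<le> c * real N"
      proof -
        have "c * real N' + c * real d \<le> c * real N"
          using Pd(3) c1 unfolding N'_def by (simp add: distrib_left[symmetric] mult_left_mono del: of_nat_add)
        then show ?thesis using Pd(2) by simp
      qed
      have fl: "P + nat \<lfloor>c * real N'\<rfloor> \<le> nat \<lfloor>c * real N\<rfloor>" using int_budget(1)[OF _ le] c1 by simp
      have ce: "P + nat \<lceil>c * real N'\<rceil> \<le> nat \<lceil>c * real N\<rceil>" using int_budget(2)[OF _ le] c1 by simp
      define s' where "s' = card (supp x \<union> T (k + P + nat \<lfloor>c * real N'\<rfloor>))"
      have ss: "s' \<le> s" unfolding s'_def s_def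
        using T_mono[of "k + P + nat \<lfloor>c * real N'\<rfloor>" "k + nat \<lfloor>c * real N\<rfloor>"] fl
        by (intro card_mono) auto
      have rs': "ric \<Phi> s' \<le> ric \<Phi> s" using ss by (rule ric_mono)
      have rN: "ric \<Phi> N' \<le> ric \<Phi> N" using N'N by (intro ric_mono) simp
      have D1: "1 + ric \<Phi> 1 \<ge> 1" using ric_nonneg[of \<Phi> 1] by simp
      have cb': "c \<ge> - (4 * (1 + ric \<Phi> 1) / (1 - ric \<Phi> s')) *
              ln (1/2 - 1/2 * sqrt ((ric \<Phi> N' + ric \<Phi> s') / (1 + ric \<Phi> N')))"
        using bnd_mono[OF ric_nonneg rN ric_nonneg rs' rs[folded s_def] D1] cb[folded s_def] by linarith
      have "supp x \<subseteq> T (k + P + nat \<lceil>c * real N'\<rceil>)"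
        using less.IH[OF N'N, rule_format, of "k + P"] rs' rs cb' unfolding N'_def[symmetric] s'_def s_def
        by (simp add: add.assoc)
      also have "\<dots> \<subseteq> T (k + nat \<lceil>c * real N\<rceil>)" using ce by (intro T_mono) simp
      finally show ?thesis .
    qed
  qed
qed

end

theorem theorem1:
  fixes \<Phi> :: "real^'n^'m" and x :: "real^'n" and K k N s :: nat and c :: real
    and T :: "nat \<Rightarrow> 'n set" and r :: "nat \<Rightarrow> real^'m"
  assumes "c > 1"
    and "card (supp x) \<le> K"
    and "omp_run \<Phi> (\<Phi> *v x) T r"
    and "k \<le> nat \<lceil>c * real K\<rceil>"
    and "N = card (supp x - T k)"
    and "s = card (supp x \<union> T (k + nat \<lfloor>c * real N\<rfloor>))"
    and "ric \<Phi> s < 1"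
    and "c \<ge> - (4 * (1 + ric \<Phi> 1) / (1 - ric \<Phi> s)) *
              ln (1/2 - 1/2 * sqrt ((ric \<Phi> N + ric \<Phi> s) / (1 + ric \<Phi> N)))"
  shows "supp x \<subseteq> T (k + nat \<lceil>c * real N\<rceil>)"
proof -
  interpret omp \<Phi> x T r by unfold_locales (rule assms(3))
  show ?thesis using main[OF assms(1), of N] assms(5-8) by blast
qed

end
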